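(* Let $\nu>-1$ be real and let $j_1^\nu$ be the smallest positive zero of $J_\nu(\cdot;q^2)$. Then $j_1^\nu<q^{-1}\sqrt{1+q^{2\nu}}$.
   Context: Fix $0<q<1$. For $a\in\mathbb C$ put $(a;q)_0=1$, $(a;q)_k=\prod_{i=0}^{k-1}(1-aq^i)$, $(a;q)_\infty=\prod_{i\ge0}(1-aq^i)$. For $\nu\in\mathbb C$ and $x\in\mathbb C\setminus\{0\}$ the Hahn–Exton $q$-Bessel function is $$J_\nu(x;q^2)=\frac{x^\nu}{(q^2;q^2)_\infty}\sum_{k=0}^\infty\frac{(-1)^kq^{k(k+1)}(q^{2\nu+2k+2};q^2)_\infty}{(q^2;q^2)_k}\,x^{2k},$$ with $x^\nu=\exp(\nu\operatorname{Log}x)$ (principal branch). For $\nu>-1$ this function has infinitely many positive zeros. *)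

theory Defs
  imports "HOL-Analysis.Analysis"
begin

definition qpoch :: "complex \<Rightarrow> real \<Rightarrow> nat \<Rightarrow> complex" where
  "qpoch a Q k = (\<Prod>i<k. 1 - a * of_real (Q ^ i))"

definition qpoch_inf :: "complex \<Rightarrow> real \<Rightarrow> complex" where
  "qpoch_inf a Q = (\<Prod>i. 1 - a * of_real (Q ^ i))"

text \<open>Hahn--Exton q-Bessel function J_nu(x; q^2), principal branch x^nu = exp(nu Log x).\<close>
definition HE_J :: "real \<Rightarrow> complex \<Rightarrow> complex \<Rightarrow> complex" where
  "HE_J q \<nu> x =
     exp (\<nu> * Ln x) / qpoch_inf (of_real (q^2)) (q^2) *
     (\<Sum>k. (-1)^k * of_real (q ^ (k * (k + 1))) *
            qpoch_inf (exp ((2 * \<nu> + 2 * of_nat k + 2) * of_real (ln q))) (q^2)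
            / qpoch (of_real (q^2)) (q^2) k * x ^ (2 * k))"

end

theory Submission
  imports Defs
begin

definition Pr :: "real \<Rightarrow> real \<Rightarrow> real" where
  "Pr c Q = (\<Prod>i. 1 - c * Q ^ i)"

definition rr :: "real \<Rightarrow> real \<Rightarrow> nat \<Rightarrow> real" where
  "rr q v k = exp ((2 * v + 2 * real k + 2) * ln q)"

definition qr :: "real \<Rightarrow> nat \<Rightarrow> real" where
  "qr Q k = (\<Prod>i<k. 1 - Q * Q ^ i)"

definition dd :: "real \<Rightarrow> real \<Rightarrow> nat \<Rightarrow> real" where
  "dd q v k = (-1) ^ k * q ^ (k * (k + 1)) * Pr (rr q v k) (q ^ 2) / qr (q ^ 2) k"

definition GG :: "real \<Rightarrow> real \<Rightarrow> real \<Rightarrow> real" where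
  "GG q v y = (\<Sum>k. dd q v k * y ^ k)"

lemma Pr_has_prod:
  assumes "0 \<le> c" "c < 1" "0 < Q" "Q < 1"
  shows "(\<lambda>i. 1 - c * Q ^ i) has_prod Pr c Q" "Pr c Q > 0"
proof -
  have sm: "summable (\<lambda>k. \<bar>- (c * Q ^ k)\<bar>)"
    using assms by (simp add: abs_mult summable_geometric)
  have ne: "- (c * Q ^ k) \<noteq> -1" for k
  proof -
    have "Q ^ k \<le> 1" using assms by (simp add: power_le_one)
    then have "c * Q ^ k < 1" using assms
      by (metis le_less_trans mult_left_le mult_right_le_one_le order.strict_iff_not zero_le_power)
    then show ?thesis by auto
  qed
  have "convergent_prod (\<lambda>k. 1 + - (c * Q ^ k))"
    by (rule summable_imp_convergent_prod_real[OF sm ne])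
  then have cp: "convergent_prod (\<lambda>i. 1 - c * Q ^ i)" by simp
  then show hp: "(\<lambda>i. 1 - c * Q ^ i) has_prod Pr c Q"
    unfolding Pr_def by (rule convergent_prod_has_prod)
  show "Pr c Q > 0"
  proof (rule has_prod_pos[OF hp])
    fix n
    have "Q ^ n \<le> 1" using assms by (simp add: power_le_one)
    then have "c * Q ^ n < 1" using assms
      by (metis le_less_trans mult_left_le mult_right_le_one_le order.strict_iff_not zero_le_power)
    then show "0 < 1 - c * Q ^ n" by simp
  qed
qed

lemma qpoch_inf_real:
  assumes "0 \<le> c" "c < 1" "0 < Q" "Q < 1"
  shows "qpoch_inf (of_real c) Q = of_real (Pr c Q)"
proof -
  have "(\<lambda>i. complex_of_real (1 - c * Q ^ i)) has_prod of_real (Pr c Q)"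
    by (subst has_prod_of_real_iff) (rule Pr_has_prod(1)[OF assms])
  then have "(\<lambda>i. 1 - complex_of_real c * of_real (Q ^ i)) has_prod of_real (Pr c Q)"
    by (simp only: of_real_diff of_real_mult of_real_1)
  then show ?thesis unfolding qpoch_inf_def by (rule has_prod_unique[symmetric])
qed

lemma Pr_Suc:
  assumes "0 \<le> c" "c < 1" "0 < Q" "Q < 1"
  shows "Pr c Q = (1 - c) * Pr (c * Q) Q"
proof -
  have cp: "convergent_prod (\<lambda>i. 1 - c * Q ^ i)"
    using Pr_has_prod(1)[OF assms] has_prod_iff by blast
  have "(\<Prod>n. 1 - c * Q ^ Suc n) = Pr c Q / (1 - c * Q ^ 0)"
    unfolding Pr_def by (rule prodinf_split_head[OF cp]) (use assms in auto)
  moreover have "(\<Prod>n. 1 - c * Q ^ Suc n) = Pr (c * Q) Q"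
    unfolding Pr_def by (simp add: mult.assoc)
  ultimately show ?thesis using assms by (simp add: field_simps)
qed


lemma rr_props:
  assumes "0 < q" "q < 1" "v > -1"
  shows "rr q v k = rr q v 0 * (q^2) ^ k" "0 < rr q v k" "rr q v k < 1"
    "rr q v 0 = q powr (2 * v) * q^2" "rr q v (Suc k) = rr q v k * q^2"
proof -
  have l: "ln q < 0" using assms by simp
  have e2: "exp (2 * ln q) = q^2"
    using assms by (metis exp_ln exp_of_nat_mult of_nat_numeral)
  have "(2 * v + 2 * real k + 2) * ln q = (2 * v + 2) * ln q + real k * (2 * ln q)"
    by (simp add: algebra_simps)
  then show A: "rr q v k = rr q v 0 * (q^2) ^ k"
    unfolding rr_def by (simp add: exp_add exp_of_nat_mult e2)
  show "0 < rr q v k" unfolding rr_def by simp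
  have "(2 * v + 2 * real k + 2) * ln q < 0"
    using assms l by (intro mult_pos_neg) auto
  then show "rr q v k < 1" unfolding rr_def by simp
  have "(2 * v + 2 * real 0 + 2) * ln q = 2 * v * ln q + 2 * ln q"
    by (simp add: algebra_simps)
  then show "rr q v 0 = q powr (2 * v) * q^2"
    unfolding rr_def powr_def using assms e2 by (simp add: exp_add mult.commute)
  have "(2 * v + 2 * real (Suc k) + 2) * ln q = (2 * v + 2 * real k + 2) * ln q + 2 * ln q"
    by (simp add: algebra_simps)
  then show "rr q v (Suc k) = rr q v k * q^2"
    unfolding rr_def by (simp add: exp_add e2)
qed

lemma qr_pos:
  assumes "0 < Q" "Q < 1"
  shows "qr Q k > 0"
  unfolding qr_def
proof (rule prod_pos)
  fix i
  have "Q * Q ^ i < 1" using assms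
    by (metis power_Suc power_less_one_iff zero_less_Suc less_imp_le)
  then show "0 < 1 - Q * Q ^ i" by simp
qed

lemma dd_rec:
  assumes "0 < q" "q < 1" "v > -1"
  shows "dd q v (Suc k) * (1 - rr q v k) * (1 - (q^2) ^ Suc k) = - ((q^2) ^ Suc k * dd q v k)"
proof -
  let ?Q = "q^2"
  have Q: "0 < ?Q" "?Q < 1" using assms by (auto simp: power_less_one_iff)
  have P: "Pr (rr q v k) ?Q = (1 - rr q v k) * Pr (rr q v (Suc k)) ?Q"
    using Pr_Suc[of "rr q v k" ?Q] rr_props(2)[OF assms, of k] rr_props(3)[OF assms, of k] Q by (simp add: rr_props(5)[OF assms])
  have qs: "qr ?Q (Suc k) = qr ?Q k * (1 - ?Q ^ Suc k)"
    unfolding qr_def by simp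
  have pw: "q ^ (Suc k * (Suc k + 1)) = q ^ (k * (k + 1)) * ?Q ^ Suc k"
  proof -
    have "Suc k * (Suc k + 1) = k * (k + 1) + 2 * Suc k" by simp
    then have "q ^ (Suc k * (Suc k + 1)) = q ^ (k * (k + 1)) * q ^ (2 * Suc k)"
      by (simp only: power_add)
    then show ?thesis by (simp only: power_mult)
  qed
  have ne1: "1 - ?Q ^ Suc k \<noteq> 0" using Q
    by (metis eq_iff_diff_eq_0 less_numeral_extra(4) power_less_one_iff zero_less_Suc less_imp_le)
  have ne2: "qr ?Q k \<noteq> 0" using qr_pos[OF Q] by (metis less_irrefl)
  show ?thesis
    unfolding dd_def qs pw P using ne1 ne2
    by (simp add: field_simps)
qed


lemma dd_bound:
  assumes "0 < q" "q < 1" "v > -1"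
  shows "\<bar>dd q v (Suc k)\<bar> * ((1 - rr q v 0) * (1 - q^2)) \<le> (q^2) ^ Suc k * \<bar>dd q v k\<bar>"
proof -
  let ?Q = "q^2"
  have Q: "0 < ?Q" "?Q < 1" using assms by (auto simp: power_less_one_iff)
  have r: "rr q v k \<le> rr q v 0"
    using rr_props(1)[OF assms, of k] rr_props(2)[OF assms, of 0] Q
    by (simp add: mult_left_le power_le_one)
  have r1: "rr q v 0 < 1" by (rule rr_props(3)[OF assms])
  have qk: "?Q ^ Suc k \<le> ?Q" using Q by (simp add: mult_left_le power_le_one)
  have "(1 - rr q v 0) * (1 - ?Q) \<le> (1 - rr q v k) * (1 - ?Q ^ Suc k)"
    using r r1 qk Q by (intro mult_mono) auto
  then have "\<bar>dd q v (Suc k)\<bar> * ((1 - rr q v 0) * (1 - ?Q)) \<le> \<bar>dd q v (Suc k)\<bar> * ((1 - rr q v k) * (1 - ?Q ^ Suc k))"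
    by (intro mult_left_mono) auto
  also have "\<dots> = \<bar>dd q v (Suc k) * (1 - rr q v k) * (1 - ?Q ^ Suc k)\<bar>"
  proof -
    have "?Q ^ Suc k < 1" using qk Q by linarith
    then have "0 < 1 - rr q v k" "0 < 1 - ?Q ^ Suc k" using r r1 by auto
    then show ?thesis by (simp add: abs_mult)
  qed
  also have "\<dots> = ?Q ^ Suc k * \<bar>dd q v k\<bar>"
    unfolding dd_rec[OF assms] by (simp add: abs_mult)
  finally show ?thesis .
qed

lemma dd_summable:
  assumes "0 < q" "q < 1" "v > -1"
  shows "summable (\<lambda>k. dd q v k * y ^ k)"
proof -
  let ?Q = "q^2"
  have Q: "0 < ?Q" "?Q < 1" using assms by (auto simp: power_less_one_iff)
  define c0 where "c0 = (1 - rr q v 0) * (1 - ?Q)"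
  have c0: "c0 > 0" unfolding c0_def using rr_props(3)[OF assms, of 0] Q by simp
  obtain N where N: "?Q ^ N < c0 / (2 * (\<bar>y\<bar> + 1))"
    using real_arch_pow_inv[of "c0 / (2 * (\<bar>y\<bar> + 1))" ?Q] c0 Q by auto
  show ?thesis
  proof (rule summable_ratio_test[of "1/2" N])
    fix n assume n: "N \<le> n"
    have "?Q ^ Suc n \<le> ?Q ^ N" using Q n by (intro power_decreasing) auto
    have b: "\<bar>dd q v (Suc n)\<bar> * c0 \<le> ?Q ^ Suc n * \<bar>dd q v n\<bar>"
      using dd_bound[OF assms, of n] unfolding c0_def .
    have "\<bar>dd q v (Suc n)\<bar> * c0 * \<bar>y\<bar> \<le> ?Q ^ Suc n * \<bar>dd q v n\<bar> * \<bar>y\<bar>"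
      using b by (intro mult_right_mono) auto
    also have "\<dots> \<le> ?Q ^ N * \<bar>dd q v n\<bar> * (\<bar>y\<bar> + 1)"
      using \<open>?Q ^ Suc n \<le> ?Q ^ N\<close> Q by (intro mult_mono) auto
    also have "\<dots> \<le> c0 / (2 * (\<bar>y\<bar> + 1)) * \<bar>dd q v n\<bar> * (\<bar>y\<bar> + 1)"
      using N by (intro mult_right_mono) auto
    also have "\<dots> = c0 * (1/2 * \<bar>dd q v n\<bar>)"
      by (simp add: field_simps)
    finally have "\<bar>dd q v (Suc n)\<bar> * \<bar>y\<bar> \<le> 1/2 * \<bar>dd q v n\<bar>"
      using c0 by (simp add: mult.commute mult.left_commute)
    then have "\<bar>dd q v (Suc n)\<bar> * \<bar>y\<bar> * \<bar>y\<bar> ^ n \<le> 1/2 * \<bar>dd q v n\<bar> * \<bar>y\<bar> ^ n"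
      by (intro mult_right_mono) auto
    then show "norm (dd q v (Suc n) * y ^ Suc n) \<le> 1/2 * norm (dd q v n * y ^ n)"
      by (simp add: abs_mult power_abs mult.assoc)
  qed simp
qed


lemma HE_J_eq:
  assumes "0 < q" "q < 1" "v > -1"
  shows "HE_J q (of_real v) (of_real t) =
    exp (of_real v * Ln (of_real t)) / of_real (Pr (q^2) (q^2)) * of_real (GG q v (t^2))"
proof -
  let ?Q = "q^2"
  have Q: "0 < ?Q" "?Q < 1" using assms by (auto simp: power_less_one_iff)
  have e: "exp ((2 * complex_of_real v + 2 * of_nat k + 2) * of_real (ln q)) = of_real (rr q v k)" for k
  proof -
    have "(2 * complex_of_real v + 2 * of_nat k + 2) * of_real (ln q) = of_real ((2 * v + 2 * real k + 2) * ln q)"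
      by simp
    then show ?thesis unfolding rr_def by (simp only: exp_of_real)
  qed
  have qi: "qpoch_inf (of_real (rr q v k)) ?Q = of_real (Pr (rr q v k) ?Q)" for k
    using qpoch_inf_real[of "rr q v k" ?Q] rr_props(2,3)[OF assms, of k] Q by simp
  have qp: "qpoch (of_real ?Q) ?Q k = of_real (qr ?Q k)" for k
    unfolding qpoch_def qr_def by simp
  have trm: "(-1)^k * of_real (q ^ (k * (k + 1))) *
            qpoch_inf (exp ((2 * of_real v + 2 * of_nat k + 2) * of_real (ln q))) ?Q
            / qpoch (of_real ?Q) ?Q k * (of_real t) ^ (2 * k) = complex_of_real (dd q v k * (t^2) ^ k)" for k
    unfolding e qi qp dd_def by (simp add: power_mult)
  have s: "(\<Sum>k. complex_of_real (dd q v k * (t^2) ^ k)) = of_real (GG q v (t^2))"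
    unfolding GG_def by (rule suminf_of_real[OF dd_summable[OF assms], symmetric])
  have p: "qpoch_inf (of_real ?Q) ?Q = of_real (Pr ?Q ?Q)"
    using qpoch_inf_real[of ?Q ?Q] Q by simp
  show ?thesis
    unfolding HE_J_def trm s p ..
qed


lemma GG_fe:
  assumes "0 < q" "q < 1" "v > -1"
  shows "GG q v y + (q^2 * y - 1 - q powr (2 * v)) * GG q v (q^2 * y)
          + q powr (2 * v) * GG q v (q^2 * (q^2 * y)) = 0"
proof -
  let ?Q = "q^2"
  define a where "a = q powr (2 * v)"
  define d where "d = dd q v"
  define e where "e k = d k * (1 - ?Q ^ k) * (1 - a * ?Q ^ k) * y ^ k" for k
  have sm: "(\<lambda>k. d k * z ^ k) sums GG q v z" for z
    unfolding d_def GG_def using dd_summable[OF assms] by (rule summable_sums)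
  have ee: "e = (\<lambda>k. (d k * y ^ k - (1 + a) * (d k * (?Q * y) ^ k)) + a * (d k * (?Q * (?Q * y)) ^ k))"
    unfolding e_def power_mult_distrib by (rule ext) (simp add: algebra_simps)
  have s1: "e sums ((GG q v y - (1 + a) * GG q v (?Q * y)) + a * GG q v (?Q * (?Q * y)))"
    unfolding ee by (intro sums_add sums_diff sums_mult sm)
  have rk: "a * ?Q ^ Suc k = rr q v k" for k
    using rr_props(1)[OF assms, of k] rr_props(4)[OF assms] unfolding a_def by (simp add: algebra_simps)
  have es: "e (Suc k) = - (?Q * y) * (d k * (?Q * y) ^ k)" for k
  proof -
    have "e (Suc k) = (dd q v (Suc k) * (1 - rr q v k) * (1 - ?Q ^ Suc k)) * y ^ Suc k"
      unfolding e_def d_def rk by (simp add: algebra_simps)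
    also have "\<dots> = - (?Q ^ Suc k * d k) * y ^ Suc k"
      unfolding dd_rec[OF assms] d_def ..
    finally show ?thesis by (simp add: power_mult_distrib algebra_simps)
  qed
  have "(\<lambda>k. e (Suc k)) sums (- (?Q * y) * GG q v (?Q * y))"
    unfolding es by (intro sums_mult sm)
  then have s2: "e sums (- (?Q * y) * GG q v (?Q * y))"
    using sums_Suc_iff[of e] by (simp add: e_def)
  have "(GG q v y - (1 + a) * GG q v (?Q * y)) + a * GG q v (?Q * (?Q * y)) = - (?Q * y) * GG q v (?Q * y)"
    using s1 s2 sums_unique2 by blast
  then show ?thesis unfolding a_def[symmetric] by (simp add: algebra_simps)
qed

lemma GG_cont:
  assumes "0 < q" "q < 1" "v > -1"
  shows "continuous_on A (GG q v)"
proof -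
  have "isCont (\<lambda>y. \<Sum>k. dd q v k * y ^ k) x" for x
    by (rule isCont_powser_converges_everywhere) (rule dd_summable[OF assms])
  then show ?thesis unfolding GG_def[abs_def]
    by (intro continuous_at_imp_continuous_on) auto
qed

lemma GG_0:
  assumes "0 < q" "q < 1" "v > -1"
  shows "GG q v 0 > 0"
proof -
  have "GG q v 0 = dd q v 0" unfolding GG_def by (rule powser_zero)
  also have "\<dots> = Pr (rr q v 0) (q^2)" unfolding dd_def qr_def by simp
  also have "\<dots> > 0"
    using Pr_has_prod(2)[of "rr q v 0" "q^2"] rr_props(2,3)[OF assms, of 0] assms
    by (simp add: power_less_one_iff)
  finally show ?thesis .
qed


theorem mainTheorem8:
  fixes q \<nu> j :: real
  assumes "0 < q" and "q < 1"
    and "\<nu> > -1"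
    and "j > 0"
    and "HE_J q (of_real \<nu>) (of_real j) = 0"
    and "\<And>t. 0 < t \<Longrightarrow> t < j \<Longrightarrow> HE_J q (of_real \<nu>) (of_real t) \<noteq> 0"
  shows "j < sqrt (1 + q powr (2 * \<nu>)) / q"
proof -
  note A = assms(1-3)
  let ?Q = "q^2"
  define a where "a = q powr (2 * \<nu>)"
  define G where "G = GG q \<nu>"
  have Q: "0 < ?Q" "?Q < 1" using A by (auto simp: power_less_one_iff)
  have a0: "a > 0" unfolding a_def using A by simp
  have PQ: "Pr ?Q ?Q > 0" using Pr_has_prod(2)[of ?Q ?Q] Q by simp
  have zi: "HE_J q (of_real \<nu>) (of_real t) = 0 \<longleftrightarrow> G (t^2) = 0" for t
    unfolding HE_J_eq[OF A] G_def using PQ by simp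
  define Y where "Y = j^2"
  define y0 where "y0 = (1 + a) / ?Q"
  have GY: "G Y = 0" using assms(5) zi unfolding Y_def by blast
  have Y0: "Y > 0" unfolding Y_def using assms(4) by simp
  have hno: "G y \<noteq> 0" if "0 < y" "y < Y" for y
  proof -
    have "sqrt y < sqrt Y" using that by (simp add: real_sqrt_less_mono)
    then have "sqrt y < j" unfolding Y_def using assms(4) by simp
    moreover have "0 < sqrt y" using that by simp
    ultimately have "HE_J q (of_real \<nu>) (of_real (sqrt y)) \<noteq> 0" using assms(6) by blast
    then show ?thesis using zi[of "sqrt y"] that by simp
  qed
  have cont: "continuous_on S G" for S unfolding G_def by (rule GG_cont[OF A])
  have G0: "G 0 > 0" unfolding G_def by (rule GG_0[OF A])
  have pos: "G y > 0" if "0 \<le> y" "y < Y" for y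
  proof (rule ccontr)
    assume "\<not> G y > 0"
    then have "G y \<le> 0" by simp
    have "\<exists>z\<ge>0. z \<le> y \<and> G z = 0"
      by (rule IVT2'[of G y 0 0, OF \<open>G y \<le> 0\<close> _ that(1) cont]) (use G0 in simp)
    then obtain z where z: "0 \<le> z" "z \<le> y" "G z = 0" by blast
    then have "z \<noteq> 0" using G0 by auto
    then show False using hno[of z] z that by auto
  qed
  have "Y < y0"
  proof (rule ccontr)
    assume "\<not> Y < y0"
    then have Yy: "y0 \<le> Y" by simp
    have fe: "G y0 + (?Q * y0 - 1 - a) * G (?Q * y0) + a * G (?Q * (?Q * y0)) = 0"
      unfolding G_def a_def by (rule GG_fe[OF A])
    have Qy: "?Q * y0 = 1 + a" unfolding y0_def using Q by simp
    have y0p: "y0 > 0" unfolding y0_def using a0 Q by simp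
    have "?Q * (?Q * y0) < y0"
    proof -
      have "?Q * y0 < 1 * y0" by (rule mult_strict_right_mono) (use Q y0p in auto)
      moreover have "?Q * (?Q * y0) < 1 * (?Q * y0)"
        by (rule mult_strict_right_mono) (use Q y0p in auto)
      ultimately show ?thesis by simp
    qed
    moreover have "?Q * (?Q * y0) > 0" using Q y0p by simp
    ultimately have "G (?Q * (?Q * y0)) > 0" using pos Yy by auto
    moreover have "G y0 = - a * G (?Q * (?Q * y0))" using fe Qy by simp
    ultimately have "G y0 < 0" using a0 by (simp add: mult_pos_pos)
    moreover have "G y0 \<ge> 0"
    proof (cases "y0 = Y")
      case True then show ?thesis using GY by simp
    next
      case False then show ?thesis using pos[of y0] Yy y0p by simp
    qed
    ultimately show False by simp
  qed
  then have "sqrt Y < sqrt y0" by (simp add: real_sqrt_less_mono)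
  moreover have "sqrt Y = j" unfolding Y_def using assms(4) by simp
  moreover have "sqrt y0 = sqrt (1 + a) / q"
    unfolding y0_def using A by (simp add: real_sqrt_divide)
  ultimately show ?thesis unfolding a_def by simp
qed

end
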